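(* For integers $n>d\ge2$, \[ \bar\delta_{n,d}\ge\frac{d^d}{(d+1)^{d+1}}\cdot\frac{(n-d)^{d+1}}{(n-d)(n-d+1)\cdots n} \] and \[ \bar\delta_{n,d}\le\frac{d^d}{(d+1)^{d+1}}\cdot\frac{\left(n-\frac{d-1}{2}\right)^{d+1}}{(n-d)(n-d+1)\cdots n}+\frac{(d+1)(n+1)}{(d-1)(n-d)^2}. \]
   Context: For integers $\lambda\ge0$, $d\ge1$, write $\lambda=\sum_{i=1}^d\binom{k_i}{i}$ uniquely with $k_d>\cdots>k_1\ge0$ and set $\lambda^{[d]}=\sum_{i=1}^d\binom{k_i}{i+1}$. For $n>d$ and $0\le\lambda\le\binom nd$ let $\delta_{n,d}(\lambda)=\lambda/\binom nd-\lambda^{[d]}/\binom n{d+1}$, and $\bar\delta_{n,d}=\max_{0\le\lambda\le\binom nd}\delta_{n,d}(\lambda)$ (denoted $\delta_{n,d}$ in the paper's section on limits). *)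

theory Defs
  imports Complex_Main
begin

definition cascade_rep :: "nat \<Rightarrow> nat \<Rightarrow> (nat \<Rightarrow> nat) \<Rightarrow> bool" where
  "cascade_rep d lam k \<longleftrightarrow>
     (\<forall>i. i \<notin> {1..d} \<longrightarrow> k i = 0) \<and>
     (\<forall>i\<in>{1..<d}. k i < k (Suc i)) \<and>
     lam = (\<Sum>i=1..d. k i choose i)"

definition cascade_seq :: "nat \<Rightarrow> nat \<Rightarrow> nat \<Rightarrow> nat" where
  "cascade_seq d lam = (THE k. cascade_rep d lam k)"

definition upper_shadow :: "nat \<Rightarrow> nat \<Rightarrow> nat" where
  "upper_shadow d lam = (\<Sum>i=1..d. cascade_seq d lam i choose (i + 1))"

definition delta :: "nat \<Rightarrow> nat \<Rightarrow> nat \<Rightarrow> real" where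
  "delta n d lam = real lam / real (n choose d) - real (upper_shadow d lam) / real (n choose (d + 1))"

definition delta_bar :: "nat \<Rightarrow> nat \<Rightarrow> real" where
  "delta_bar n d = Max ((\<lambda>lam. delta n d lam) ` {0..n choose d})"

end

theory Submission
  imports Defs "HOL-Analysis.Convex"
begin

lemma casc_lower:
  assumes inc: "\<forall>i\<in>{1..<d}. k i < k (Suc i)" and i: "1 \<le> i" "i \<le> d"
  shows "i - 1 \<le> k i"
  using i
proof (induction i)
  case 0 then show ?case by simp
next
  case (Suc i)
  show ?case
  proof (cases "i = 0")
    case True then show ?thesis by simp
  next
    case False
    then have "i - 1 \<le> k i" using Suc by simp
    moreover have "k i < k (Suc i)" using inc Suc.prems False by auto
    ultimately show ?thesis by simp
  qed
qed

lemma casc_partial_bound: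
  assumes inc: "\<forall>i\<in>{1..<j}. k i < k (Suc i)" and j: "1 \<le> j"
  shows "(\<Sum>i=1..j. k i choose i) < (k j + 1) choose j"
  using inc j
proof (induction j)
  case 0 then show ?case by simp
next
  case (Suc j)
  show ?case
  proof (cases "j = 0")
    case True then show ?thesis by simp
  next
    case False
    have IH: "(\<Sum>i=1..j. k i choose i) < (k j + 1) choose j"
      using Suc False by auto
    have lt: "k j < k (Suc j)" using Suc.prems False by auto
    have "(\<Sum>i=1..Suc j. k i choose i) = (\<Sum>i=1..j. k i choose i) + (k (Suc j) choose Suc j)"
      by simp
    also have "\<dots> < ((k j + 1) choose j) + (k (Suc j) choose Suc j)" using IH by simp
    also have "\<dots> \<le> (k (Suc j) choose j) + (k (Suc j) choose Suc j)"
      using binomial_right_mono[of "k j + 1" "k (Suc j)" j] lt by simp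
    also have "\<dots> = (k (Suc j) + 1) choose Suc j" by simp
    finally show ?thesis .
  qed
qed

lemma casc_restrict:
  assumes "cascade_rep (Suc d) lam k"
  shows "cascade_rep d (lam - (k (Suc d) choose Suc d)) (k(Suc d := 0))"
  using assms unfolding cascade_rep_def by auto

lemma casc_unique:
  "cascade_rep d lam k \<Longrightarrow> cascade_rep d lam k' \<Longrightarrow> k = k'"
proof (induction d arbitrary: lam k k')
  case 0
  then show ?case unfolding cascade_rep_def by auto
next
  case (Suc d)
  have r: "\<forall>i\<in>{1..<Suc d}. k i < k (Suc i)" "lam = (\<Sum>i=1..Suc d. k i choose i)"
    using Suc.prems(1) unfolding cascade_rep_def by auto
  have r': "\<forall>i\<in>{1..<Suc d}. k' i < k' (Suc i)" "lam = (\<Sum>i=1..Suc d. k' i choose i)"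
    using Suc.prems(2) unfolding cascade_rep_def by auto
  have le1: "(kk (Suc d) choose Suc d) \<le> (\<Sum>i=1..Suc d. kk i choose i)" for kk :: "nat \<Rightarrow> nat"
    by (simp)
  have top: "k (Suc d) = k' (Suc d)"
  proof (rule ccontr)
    assume "k (Suc d) \<noteq> k' (Suc d)"
    then consider "k (Suc d) < k' (Suc d)" | "k' (Suc d) < k (Suc d)" by linarith
    then show False
    proof cases
      case 1
      have "lam < (k (Suc d) + 1) choose Suc d" using casc_partial_bound[OF r(1)] r(2) by simp
      also have "\<dots> \<le> k' (Suc d) choose Suc d" by (metis Suc_eq_plus1 binomial_right_mono Suc_leI 1)
      also have "\<dots> \<le> lam" using le1[of k'] r'(2) by simp
      finally show False by simp
    next
      case 2
      have "lam < (k' (Suc d) + 1) choose Suc d" using casc_partial_bound[OF r'(1)] r'(2) by simp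
      also have "\<dots> \<le> k (Suc d) choose Suc d" by (metis Suc_eq_plus1 binomial_right_mono Suc_leI 2)
      also have "\<dots> \<le> lam" using le1[of k] r(2) by simp
      finally show False by simp
    qed
  qed
  have c1: "cascade_rep d (lam - (k (Suc d) choose Suc d)) (k(Suc d := 0))"
    by (rule casc_restrict[OF Suc.prems(1)])
  have c2: "cascade_rep d (lam - (k (Suc d) choose Suc d)) (k'(Suc d := 0))"
    using casc_restrict[OF Suc.prems(2)] top by simp
  have "k(Suc d := 0) = k'(Suc d := 0)"
    by (rule Suc.IH[OF c1 c2])
  then show ?case using top by (metis fun_upd_triv fun_upd_upd)
qed

lemma casc_exists:
  "lam < M choose d \<Longrightarrow> \<exists>k. cascade_rep d lam k \<and> (1 \<le> d \<longrightarrow> k d < M)"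
proof (induction d arbitrary: lam M)
  case 0
  then have "lam = 0" by simp
  then have "cascade_rep 0 lam (\<lambda>_. 0)" unfolding cascade_rep_def by simp
  then show ?case by (intro exI[of _ "\<lambda>_. 0"]) simp
next
  case (Suc d)
  define L where "L = (LEAST t. lam < t choose Suc d)"
  have L1: "lam < L choose Suc d" unfolding L_def by (rule LeastI[of _ M]) (use Suc.prems in simp)
  have L2: "L \<le> M" unfolding L_def by (rule Least_le) (use Suc.prems in simp)
  have L0: "L \<noteq> 0" using L1 by (cases L) auto
  define t where "t = L - 1"
  have tL: "Suc t = L" using L0 t_def by simp
  have t1: "t choose Suc d \<le> lam"
    using not_less_Least[of t "\<lambda>t. lam < t choose Suc d"] tL unfolding L_def by fastforce
  have t2: "lam < Suc t choose Suc d" using L1 tL by simp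
  have tM: "t < M" using tL L2 by simp
  have "lam - (t choose Suc d) < t choose d" using t1 t2 by simp
  from Suc.IH[OF this] obtain k' where k': "cascade_rep d (lam - (t choose Suc d)) k'"
      and k'd: "1 \<le> d \<longrightarrow> k' d < t" by blast
  define k where "k = k'(Suc d := t)"
  have k'z: "\<forall>i. i \<notin> {1..d} \<longrightarrow> k' i = 0" and k'inc: "\<forall>i\<in>{1..<d}. k' i < k' (Suc i)"
    and k'sum: "lam - (t choose Suc d) = (\<Sum>i=1..d. k' i choose i)"
    using k' unfolding cascade_rep_def by blast+
  have kz: "\<forall>i. i \<notin> {1..Suc d} \<longrightarrow> k i = 0"
  proof (intro allI impI)
    fix i assume "i \<notin> {1..Suc d}"
    then have "i \<noteq> Suc d" "i \<notin> {1..d}" by auto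
    then show "k i = 0" using k'z unfolding k_def by simp
  qed
  have kinc: "\<forall>i\<in>{1..<Suc d}. k i < k (Suc i)"
  proof
    fix i assume i: "i \<in> {1..<Suc d}"
    show "k i < k (Suc i)"
    proof (cases "i = d")
      case True then show ?thesis using k'd i unfolding k_def by auto
    next
      case False
      then have "i \<in> {1..<d}" "i \<noteq> Suc d" "Suc i \<noteq> Suc d" using i by auto
      then show ?thesis using k'inc unfolding k_def by simp
    qed
  qed
  have "(\<Sum>i=1..Suc d. k i choose i) = (\<Sum>i=1..d. k i choose i) + (k (Suc d) choose Suc d)"
    by simp
  also have "(\<Sum>i=1..d. k i choose i) = (\<Sum>i=1..d. k' i choose i)"
    by (rule sum.cong) (auto simp: k_def)
  also have "k (Suc d) = t" by (simp add: k_def)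
  also have "(\<Sum>i=1..d. k' i choose i) + (t choose Suc d) = lam" using k'sum t1 by simp
  finally have "cascade_rep (Suc d) lam k" using kz kinc unfolding cascade_rep_def by simp
  moreover have "k (Suc d) < M" using tM unfolding k_def by simp
  ultimately show ?case by blast
qed

lemma casc_seq:
  assumes "lam < M choose d"
  shows "cascade_rep d lam (cascade_seq d lam)" "1 \<le> d \<Longrightarrow> cascade_seq d lam d < M"
proof -
  obtain k where k: "cascade_rep d lam k" "1 \<le> d \<longrightarrow> k d < M" using casc_exists[OF assms] by blast
  have "cascade_seq d lam = k" unfolding cascade_seq_def
    using k(1) casc_unique by blast
  then show "cascade_rep d lam (cascade_seq d lam)" "1 \<le> d \<Longrightarrow> cascade_seq d lam d < M"
    using k by auto
qed

lemma casc_seq_eq: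
  assumes "cascade_rep d lam k" shows "cascade_seq d lam = k"
  unfolding cascade_seq_def using assms casc_unique by blast

lemma chooseR: "real (k choose i) = (\<Prod>j<i. real k - real j) / fact i"
  by (simp add: binomial_gbinomial gbinomial_prod_rev atLeast0LessThan)

lemma choose_Suc_R: "real (k choose Suc i) * real (Suc i) = real (k choose i) * (real k - real i)"
proof -
  define P where "P = (\<Prod>j<i. real k - real j)"
  have a: "(\<Prod>j<Suc i. real k - real j) = P * (real k - real i)"
    unfolding P_def by simp
  have b: "(fact (Suc i) :: real) = fact i * real (Suc i)" by (simp only: fact_Suc) simp
  have F: "(fact i :: real) > 0" by simp
  have c1: "real (k choose Suc i) = P * (real k - real i) / (fact i * real (Suc i))"
    unfolding chooseR[of k "Suc i"] a b by simp
  have c2: "real (k choose i) = P / fact i" unfolding chooseR P_def by simp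
  have s: "real (Suc i) > 0" by simp
  show ?thesis unfolding c1 c2 using F s by (simp add: field_simps del: of_nat_Suc)
qed

lemma ypow: fixes y :: real assumes "0 \<le> y" "y \<le> 1"
  shows "real (Suc i) * y ^ i * (1 - y) \<le> 1"
proof -
  have "real (Suc i) * y ^ i = (\<Sum>j<Suc i. y ^ i)" by simp
  also have "\<dots> \<le> (\<Sum>j<Suc i. y ^ j)"
    by (rule sum_mono) (use assms in \<open>auto intro: power_decreasing\<close>)
  finally have "real (Suc i) * y ^ i * (1 - y) \<le> (\<Sum>j<Suc i. y ^ j) * (1 - y)"
    using assms by (intro mult_right_mono) auto
  also have "\<dots> = 1 - y ^ Suc i" using one_diff_power_eq[of y "Suc i"] by (simp add: mult.commute)
  also have "\<dots> \<le> 1" using assms by simp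
  finally show ?thesis .
qed

lemma choose_ratio:
  assumes "k \<le> N"
  shows "real (k choose i) \<le> real (N choose i) * ((real k + 1) / (real N + 1)) ^ i"
proof (cases "i \<le> k")
  case False
  then show ?thesis by (simp add: binomial_eq_0)
next
  case True
  let ?t = "(real k + 1) / (real N + 1)"
  have t0: "0 \<le> ?t" by simp
  have "(\<Prod>j<i. real k - real j) \<le> (\<Prod>j<i. (real N - real j) * ?t)"
  proof (rule prod_mono)
    fix j assume j: "j \<in> {..<i}"
    then have jk: "j < k" using True by auto
    have "(real k - real j) * (real N + 1) \<le> (real k + 1) * (real N - real j)"
      using assms jk by (simp add: algebra_simps) (metis of_nat_le_iff mult_right_mono of_nat_0_le_iff add_mono order_refl of_nat_mult le_add2 mult.commute)
    then have "real k - real j \<le> (real N - real j) * ?t"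
      by (simp add: field_simps)
    then show "0 \<le> real k - real j \<and> real k - real j \<le> (real N - real j) * ?t"
      using jk by simp
  qed
  also have "\<dots> = (\<Prod>j<i. real N - real j) * ?t ^ i"
    by (simp only: prod.distrib prod_constant card_lessThan)
  finally show ?thesis unfolding chooseR
    by (simp add: divide_right_mono mult.commute mult.left_commute times_divide_eq_left)
qed

lemma cancel_helper:
  fixes a c M K s :: real
  assumes "a \<noteq> 0" "c \<noteq> 0" "M \<noteq> 0"
  shows "(a * M / (c * s)) * (c * K / (a * M)) = K / s"
  using assms by (simp add: field_simps)

lemma Dy_helper:
  fixes a c M K :: real
  assumes "a \<noteq> 0" "M \<noteq> 0"
  shows "a * M - c * K = a * M * (1 - c * K / (a * M))"
  using assms by (simp add: field_simps)

lemma lhs_helper: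
  fixes A m C k i d :: real
  assumes "A \<noteq> 0" "m \<noteq> 0" "i + 1 \<noteq> 0" "d + 1 \<noteq> 0"
  shows "C / A - (C * (k - i) / (i + 1)) / (A * m / (d + 1))
       = C * ((i + 1) * (m + d + 1) - (d + 1) * (k + 1)) / ((i + 1) * A * m)"
proof -
  have Z: "(i + 1) * A * m \<noteq> 0" using assms by simp
  have e1: "C / A * ((i + 1) * A * m) = C * (i + 1) * m" using assms by (simp add: field_simps)
  have Z2: "A * m + A * (i * m) \<noteq> 0" "A * m \<noteq> 0"
    using Z assms by (simp_all add: algebra_simps)
  have e2: "(C * (k - i) / (i + 1)) / (A * m / (d + 1)) * ((i + 1) * A * m) = C * (k - i) * (d + 1)"
    using assms Z2 by (simp add: field_simps)
  have "(C / A - (C * (k - i) / (i + 1)) / (A * m / (d + 1))) * ((i + 1) * A * m)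
      = C * ((i + 1) * (m + d + 1) - (d + 1) * (k + 1))"
    unfolding left_diff_distrib e1 e2 by (simp add: algebra_simps)
  then show ?thesis using Z by (simp add: eq_divide_eq)
qed

lemma T1_key:
  fixes k i m d :: nat
  assumes id: "i \<le> d"
  defines "b \<equiv> (real i + 1) * (real m + real d + 1) / ((real d + 1) * (real m + real i + 1))"
  shows "real (k choose i) * ((real i + 1) * (real m + real d + 1) - (real d + 1) * (real k + 1))
         \<le> (real m + real d + 1) * real (m + i choose i) * b ^ i"
proof (cases "(real i + 1) * (real m + real d + 1) - (real d + 1) * (real k + 1) \<le> 0")
  case True
  have "real (k choose i) * ((real i + 1) * (real m + real d + 1) - (real d + 1) * (real k + 1)) \<le> 0"
    using True by (simp add: mult_nonneg_nonpos)
  also have "0 \<le> (real m + real d + 1) * real (m + i choose i) * b ^ i"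
    unfolding b_def by simp
  finally show ?thesis .
next
  case False
  define D where "D = (real i + 1) * (real m + real d + 1) - (real d + 1) * (real k + 1)"
  have D0: "D > 0" using False D_def by simp
  have "(real i + 1) * (real m + real d + 1) \<le> (real d + 1) * (real m + real i + 1)"
    using id by (simp add: algebra_simps mult_right_mono)
  then have "(real d + 1) * (real k + 1) < (real d + 1) * (real m + real i + 1)"
    using D0 D_def by linarith
  then have "real k + 1 < real m + real i + 1"
    by (simp add: mult_less_cancel_left_pos)
  then have km: "k \<le> m + i" by linarith
  define x where "x = (real k + 1) / (real (m + i) + 1)"
  define y where "y = (real d + 1) * (real k + 1) / ((real i + 1) * (real m + real d + 1))"
  have y0: "0 \<le> y" unfolding y_def by simp
  have y1: "y \<le> 1"
    using D0 unfolding D_def y_def by (simp add: divide_le_eq)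
  have nz: "real i + 1 \<noteq> 0" "real m + real d + 1 \<noteq> 0" "real d + 1 \<noteq> 0" "real m + real i + 1 \<noteq> 0"
    by linarith+
  have xby: "x = b * y" unfolding x_def b_def y_def
    using cancel_helper[OF nz(1) nz(3) nz(2), of "real k + 1" "real m + real i + 1"] by simp
  have Dy: "D = (real i + 1) * (real m + real d + 1) * (1 - y)"
    unfolding D_def y_def by (rule Dy_helper[OF nz(1) nz(2)])
  have b0: "b \<ge> 0" unfolding b_def by simp
  have "real (k choose i) * D \<le> real (m + i choose i) * x ^ i * D"
    using choose_ratio[OF km, of i] D0 unfolding x_def by (intro mult_right_mono) auto
  also have "\<dots> = real (m + i choose i) * b ^ i * (real m + real d + 1) * (real (Suc i) * y ^ i * (1 - y))"
    unfolding xby Dy by (simp add: power_mult_distrib algebra_simps)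
  also have "\<dots> \<le> real (m + i choose i) * b ^ i * (real m + real d + 1) * 1"
    using ypow[OF y0 y1, of i] b0 by (intro mult_left_mono) auto
  finally show ?thesis unfolding D_def by (simp add: algebra_simps)
qed

definition Ef :: "nat \<Rightarrow> nat \<Rightarrow> nat \<Rightarrow> real" where
  "Ef n d i = real ((n - d) + i choose i) *
     ((real i + 1) * (real n + 1) / ((real d + 1) * (real (n - d) + real i + 1))) ^ i / (real i + 1)"

lemma binom_top_rel:
  assumes "d < n"
  shows "real (n choose (d + 1)) * (real d + 1) = real (n choose d) * real (n - d)"
  using choose_Suc_R[of n d] assms by (auto simp: of_nat_diff algebra_simps)

lemma T1:
  assumes "i \<le> d" "d < n"
  shows "real (k choose i) / real (n choose d) - real (k choose (i + 1)) / real (n choose (d + 1))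
         \<le> (real n + 1) / (real (n - d) * real (n choose d)) * Ef n d i"
proof -
  define m where "m = n - d"
  have nm: "real n = real m + real d" using assms unfolding m_def by simp
  have m0: "real m > 0" using assms unfolding m_def by simp
  define A where "A = real (n choose d)"
  define B where "B = real (n choose (d + 1))"
  have A0: "A > 0" unfolding A_def using assms by simp
  have nz1: "1 + real i \<noteq> 0" "real i + 1 \<noteq> 0" "1 + real d \<noteq> 0" "real d + 1 \<noteq> 0" by linarith+
  have B0: "B > 0" unfolding B_def using assms by simp
  have AB: "B * (real d + 1) = A * real m" unfolding A_def B_def m_def using binom_top_rel[OF assms(2)] .
  have kk: "real (k choose (i + 1)) * (real i + 1) = real (k choose i) * (real k - real i)"
    using choose_Suc_R[of k i] by (auto simp: algebra_simps)
  define C where "C = real (k choose i)"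
  define b where "b = (real i + 1) * (real m + real d + 1) / ((real d + 1) * (real m + real i + 1))"
  have key: "C * ((real i + 1) * (real m + real d + 1) - (real d + 1) * (real k + 1))
         \<le> (real m + real d + 1) * real (m + i choose i) * b ^ i"
    unfolding C_def b_def by (rule T1_key[OF assms(1)])
  have Bv: "B = A * real m / (real d + 1)" using AB by (simp add: field_simps)
  have Kv: "real (k choose (i + 1)) = C * (real k - real i) / (real i + 1)"
    using kk unfolding C_def by (simp add: field_simps)
  have lhs: "real (k choose i) / real (n choose d) - real (k choose (i + 1)) / real (n choose (d + 1))
      = C * ((real i + 1) * (real m + real d + 1) - (real d + 1) * (real k + 1)) / ((real i + 1) * A * real m)"
    unfolding A_def[symmetric] B_def[symmetric] C_def[symmetric] Kv Bv
    using lhs_helper[of A "real m" "real i" "real d" C "real k"] A0 m0 nz1 by simp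
  have rhs: "(real n + 1) / (real (n - d) * real (n choose d)) * Ef n d i
      = (real m + real d + 1) * real (m + i choose i) * b ^ i / ((real i + 1) * A * real m)"
    unfolding Ef_def A_def[symmetric] m_def[symmetric] b_def nm by (simp add: field_simps)
  show ?thesis unfolding lhs rhs
    using key A0 m0 by (intro divide_right_mono) auto
qed

lemma qpow:
  fixes a :: real
  assumes "0 \<le> a" "a \<le> 1"
  shows "(1 - a) ^ i * (1 + real i * a) \<le> 1"
proof -
  have "1 + real i * a \<le> (1 + a) ^ i" using Bernoulli_inequality[of a i] assms by simp
  then have "(1 - a) ^ i * (1 + real i * a) \<le> (1 - a) ^ i * (1 + a) ^ i"
    using assms by (intro mult_left_mono) auto
  also have "\<dots> = (1 - a * a) ^ i" by (simp add: power_mult_distrib[symmetric] algebra_simps)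
  also have "\<dots> \<le> 1" using assms by (intro power_le_one) (auto simp: mult_le_one)
  finally show ?thesis .
qed

lemma cancel2:
  fixes D N I S :: real
  assumes "D \<noteq> 0" "N \<noteq> 0"
  shows "D / N * (I * N / (D * S)) = I / S"
  using assms by (simp add: field_simps)

lemma cancel3:
  fixes X S Y :: real
  assumes "X \<noteq> 0"
  shows "X / S * Y / X = Y / S"
  using assms by (simp add: field_simps)

lemma cancel4:
  fixes P Q D N I S :: real
  assumes "P \<noteq> 0" "Q \<noteq> 0" "D \<noteq> 0"
  shows "(P * N / (D * Q)) * (I * Q / (P * S)) = I * N / (D * S)"
  using assms by (simp add: field_simps)

lemma cancel5:
  fixes S P I M :: real
  assumes "S \<noteq> 0" "P \<noteq> 0"
  shows "I * (M / (P * S)) * S = I * M / P"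
  using assms by (simp add: field_simps)

lemma T2:
  assumes dn: "d < n" and m3: "3 \<le> n - d" and i1: "1 \<le> i"
  shows "Ef n d i \<le> (real d + 1) / (real n + 1) * Ef n d (i + 1)"
proof -
  define m where "m = n - d"
  have nm: "real n = real m + real d" using dn unfolding m_def by simp
  define s where "s = real m + real i + 1"
  define c where "c = real (m + i choose i)"
  define bi where "bi = (real i + 1) * (real n + 1) / ((real d + 1) * s)"
  define bj where "bj = (real i + 2) * (real n + 1) / ((real d + 1) * (s + 1))"
  have s0: "s > 0" unfolding s_def by simp
  have nz: "real d + 1 \<noteq> 0" "real n + 1 \<noteq> 0" "s + 1 \<noteq> 0" "real i + 1 \<noteq> 0" "real i + 2 \<noteq> 0"
    "1 + real d \<noteq> 0" "1 + real n \<noteq> 0" "1 + s \<noteq> 0" "1 + real i \<noteq> 0" "2 + real i \<noteq> 0" "s \<noteq> 0"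
    using s0 by linarith+
  have c0: "c \<ge> 0" unfolding c_def by simp
  have Ei: "Ef n d i = c * bi ^ i / (real i + 1)"
    unfolding Ef_def m_def[symmetric] c_def bi_def s_def by simp
  have C': "real (m + (i + 1) choose (i + 1)) = s * c / (real i + 1)"
  proof -
    have "real (Suc i) * real (Suc (m + i) choose Suc i) = real (Suc (m + i)) * real (m + i choose i)"
      using Suc_times_binomial[of i "m + i"] by (metis of_nat_mult)
    then show ?thesis unfolding s_def c_def by (simp add: field_simps)
  qed
  have Ej: "Ef n d (i + 1) = s * c / (real i + 1) * bj ^ (i + 1) / (real i + 2)"
    unfolding Ef_def m_def[symmetric] C' bj_def s_def by (simp add: ac_simps)
  have gb: "(real d + 1) / (real n + 1) * bj = (real i + 2) / (s + 1)"
    unfolding bj_def by (rule cancel2[OF nz(1) nz(2)])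
  define W where "W = s * c / (real i + 1)"
  have rhs: "(real d + 1) / (real n + 1) * Ef n d (i + 1) = W * bj ^ i / (s + 1)"
  proof -
    have "(real d + 1) / (real n + 1) * Ef n d (i + 1)
        = ((real d + 1) / (real n + 1) * bj) * (W * bj ^ i) / (real i + 2)"
      unfolding Ej W_def by (simp add: power_Suc mult_ac)
    also have "\<dots> = (real i + 2) / (s + 1) * (W * bj ^ i) / (real i + 2)"
      by (simp only: gb)
    also have "\<dots> = W * bj ^ i / (s + 1)"
      by (rule cancel3[OF nz(5)])
    finally show ?thesis .
  qed
  define a where "a = real m / ((real i + 2) * s)"
  have bij: "bi = bj * (1 - a)"
  proof -
    have "(real i + 2) * s - real m = (real i + 1) * (s + 1)" unfolding s_def by (simp add: algebra_simps)
    note eq = this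
    have X: "(real i + 2) * s \<noteq> 0" using nz by simp
    have "1 - a = ((real i + 2) * s - real m) / ((real i + 2) * s)"
      unfolding a_def using X by (simp add: diff_divide_distrib)
    also have "\<dots> = (real i + 1) * (s + 1) / ((real i + 2) * s)" by (simp only: eq)
    finally have "1 - a = (real i + 1) * (s + 1) / ((real i + 2) * s)" .
    then show ?thesis unfolding bi_def bj_def
      using cancel4[of "real i + 2" "s + 1" "real d + 1" "real n + 1" "real i + 1" s] nz by simp
  qed
  have a0: "0 \<le> a" unfolding a_def using s0 by simp
  have a1: "a \<le> 1"
  proof -
    have "real m \<le> (real i + 2) * (real m + real i + 1)"
      by (simp add: algebra_simps)
    then show ?thesis unfolding a_def using s0 by (simp add: divide_le_eq s_def)
  qed
  have q: "(1 - a) ^ i * (1 + real i * a) \<le> 1" by (rule qpow[OF a0 a1])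
  have m3': "real m \<ge> 3" using m3 unfolding m_def by simp
  have ia: "real i * a * s \<ge> 1"
  proof -
    have "real i * a * s = real i * real m / (real i + 2)" unfolding a_def
      using cancel5[of s "real i + 2" "real i" "real m"] nz by simp
    moreover have "real i + 2 \<le> real i * real m"
    proof -
      have "real i * real m \<ge> real i * 3" using m3' by (intro mult_left_mono) auto
      then show ?thesis using i1 by linarith
    qed
    ultimately show ?thesis by (simp add: le_divide_eq)
  qed
  have qs: "(1 - a) ^ i \<le> s / (s + 1)"
  proof -
    have p0: "1 + real i * a > 0" using a0 by (simp add: add_pos_nonneg)
    have "(1 - a) ^ i \<le> 1 / (1 + real i * a)" using q p0 by (simp add: le_divide_eq)
    also have "\<dots> \<le> s / (s + 1)"
      using ia s0 p0 by (simp add: divide_le_eq le_divide_eq algebra_simps)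
    finally show ?thesis .
  qed
  have bj0: "bj \<ge> 0" unfolding bj_def using s0 by simp
  have "bi ^ i = bj ^ i * (1 - a) ^ i" unfolding bij by (simp add: power_mult_distrib)
  also have "\<dots> \<le> bj ^ i * (s / (s + 1))" using qs bj0 by (intro mult_left_mono) auto
  finally have bb: "bi ^ i \<le> bj ^ i * (s / (s + 1))" .
  have "Ef n d i = c / (real i + 1) * bi ^ i" unfolding Ei by simp
  also have "\<dots> \<le> c / (real i + 1) * (bj ^ i * (s / (s + 1)))"
    using bb c0 by (intro mult_left_mono) auto
  also have "\<dots> = W * bj ^ i / (s + 1)" unfolding W_def using nz by (simp add: field_simps)
  finally show ?thesis unfolding rhs .
qed

lemma Edm1:
  assumes "2 \<le> d" "d < n"
  shows "Ef n d (d - 1) \<le> real (n choose d) / real n"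
proof -
  have e1: "n - d + (d - 1) = n - 1" using assms by simp
  have e2: "real (n - d) + real (d - 1) + 1 = real n" using assms by (simp add: of_nat_diff)
  have e3: "real (d - 1) + 1 = real d" using assms by (simp add: of_nat_diff)
  define b where "b = real d * (real n + 1) / ((real d + 1) * real n)"
  have Ev: "Ef n d (d - 1) = real (n - 1 choose (d - 1)) * b ^ (d - 1) / real d"
    unfolding Ef_def e1 e2 e3 b_def by simp
  have b0: "0 \<le> b" unfolding b_def by simp
  have b1: "b \<le> 1"
  proof -
    have "real d * (real n + 1) \<le> (real d + 1) * real n" using assms by (simp add: algebra_simps)
    then show ?thesis unfolding b_def using assms by (simp add: divide_le_eq)
  qed
  have bp: "b ^ (d - 1) \<le> 1" using b0 b1 by (simp add: power_le_one)
  have "real d * real (n choose d) = real n * real (n - 1 choose (d - 1))"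
    using times_binomial_minus1_eq[of d n] assms by (metis of_nat_mult not_gr0 not_numeral_le_zero le_zero_eq)
  then have cv: "real (n - 1 choose (d - 1)) / real d = real (n choose d) / real n"
    using assms by (simp add: field_simps)
  have "Ef n d (d - 1) \<le> real (n - 1 choose (d - 1)) * 1 / real d"
    unfolding Ev using bp by (intro divide_right_mono mult_left_mono) auto
  then show ?thesis using cv by simp
qed

lemma Eiter:
  assumes "2 \<le> d" "d < n" "3 \<le> n - d"
  shows "j \<le> d - 2 \<Longrightarrow> Ef n d (d - 1 - j) \<le> ((real d + 1) / (real n + 1)) ^ j * Ef n d (d - 1)"
proof (induction j)
  case 0 then show ?case by simp
next
  case (Suc j)
  have i1: "1 \<le> d - 1 - Suc j" using Suc.prems by simp
  have eq: "d - 1 - Suc j + 1 = d - 1 - j" using Suc.prems by simp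
  have g0: "(real d + 1) / (real n + 1) \<ge> 0" by simp
  have "Ef n d (d - 1 - Suc j) \<le> (real d + 1) / (real n + 1) * Ef n d (d - 1 - j)"
    using T2[OF assms(2) assms(3) i1] unfolding eq .
  also have "\<dots> \<le> (real d + 1) / (real n + 1) * (((real d + 1) / (real n + 1)) ^ j * Ef n d (d - 1))"
    using Suc g0 by (intro mult_left_mono) auto
  finally show ?case by (simp add: mult.assoc)
qed

lemma geom_bound:
  fixes g :: real
  assumes "0 \<le> g" "g < 1"
  shows "(\<Sum>i=1..D. g ^ (D - i)) \<le> 1 / (1 - g)"
proof -
  have "(\<Sum>i=1..D. g ^ (D - i)) = (\<Sum>k<D. g ^ (D - Suc k))"
    using sum.atLeast1_atMost_eq[of "\<lambda>i. g ^ (D - i)" D] by simp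
  also have "\<dots> = (\<Sum>k<D. g ^ k)" by (rule sum.nat_diff_reindex)
  finally have s: "(\<Sum>i=1..D. g ^ (D - i)) = (\<Sum>k<D. g ^ k)" .
  have "(1 - g) * (\<Sum>k<D. g ^ k) = 1 - g ^ D" using one_diff_power_eq[of g D] by simp
  also have "\<dots> \<le> 1" using assms by simp
  finally have "(1 - g) * (\<Sum>k<D. g ^ k) \<le> 1" .
  then show ?thesis unfolding s using assms by (simp add: le_divide_eq mult.commute)
qed

definition Ff :: "nat \<Rightarrow> nat \<Rightarrow> nat \<Rightarrow> nat \<Rightarrow> real" where
  "Ff n d i k = real (k choose i) / real (n choose d) - real (k choose (i + 1)) / real (n choose (d + 1))"

lemma tail_bound:
  assumes "2 \<le> d" "d < n" "3 \<le> n - d"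
  shows "(\<Sum>i=1..d-1. Ff n d i (kk i)) \<le> (real n + 1) ^ 2 / (real n * real (n - d) ^ 2)"
proof -
  define g where "g = (real d + 1) / (real n + 1)"
  define m where "m = real (n - d)"
  define A where "A = real (n choose d)"
  have m0: "m > 0" using assms unfolding m_def by simp
  have A0: "A > 0" using assms unfolding A_def by simp
  have n0: "real n > 0" using assms by simp
  have g0: "0 \<le> g" unfolding g_def by simp
  have g1: "g < 1" unfolding g_def using assms by simp
  have gm: "1 - g = m / (real n + 1)"
    unfolding g_def m_def using assms by (simp add: field_simps of_nat_diff)
  define K where "K = (real n + 1) / (m * A)"
  have K0: "K \<ge> 0" unfolding K_def using m0 A0 by simp
  have each: "Ff n d i (kk i) \<le> K * (g ^ (d - 1 - i) * (A / real n))" if i: "i \<in> {1..d-1}" for i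
  proof -
    have id: "i \<le> d" using i by auto
    have "Ff n d i (kk i) \<le> K * Ef n d i"
      unfolding Ff_def K_def m_def A_def using T1[OF id assms(2), of "kk i"] by simp
    also have "\<dots> \<le> K * (g ^ (d - 1 - i) * Ef n d (d - 1))"
    proof -
      have j: "d - 1 - (d - 1 - i) = i" "d - 1 - i \<le> d - 2" using i by auto
      show ?thesis using Eiter[OF assms, of "d - 1 - i"] j K0 unfolding g_def
        by (intro mult_left_mono) auto
    qed
    also have "\<dots> \<le> K * (g ^ (d - 1 - i) * (A / real n))"
      using Edm1[OF assms(1,2)] K0 g0 unfolding A_def
      by (intro mult_left_mono) auto
    finally show ?thesis .
  qed
  have "(\<Sum>i=1..d-1. Ff n d i (kk i)) \<le> (\<Sum>i=1..d-1. K * (g ^ (d - 1 - i) * (A / real n)))"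
    by (rule sum_mono) (rule each)
  also have "\<dots> = K * (A / real n) * (\<Sum>i=1..d-1. g ^ (d - 1 - i))"
    by (simp add: sum_distrib_left sum_distrib_right mult_ac)
  also have "\<dots> \<le> K * (A / real n) * (1 / (1 - g))"
    using geom_bound[OF g0 g1, of "d - 1"] K0 A0 n0 by (intro mult_left_mono) auto
  also have "\<dots> = (real n + 1) ^ 2 / (real n * m ^ 2)"
    unfolding K_def gm using m0 A0 n0 by (simp add: field_simps power2_eq_square)
  finally show ?thesis unfolding m_def .
qed

lemma Pval:
  assumes "d < n"
  shows "(\<Prod>j=n-d..n. real j) = real (n choose (d + 1)) * fact (d + 1)"
proof -
  have f1: "fact n = fact (n - d - 1) * \<Prod>{Suc (n - d - 1)..n}"
    by (rule fact_eq_fact_times) simp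
  have s: "Suc (n - d - 1) = n - d" using assms by simp
  have f2: "fact (d + 1) * fact (n - (d + 1)) * (n choose (d + 1)) = (fact n :: nat)"
    by (rule binomial_fact_lemma) (use assms in simp)
  have "fact (n - d - 1) * \<Prod>{n - d..n} = fact (n - d - 1) * (fact (d + 1) * (n choose (d + 1)))"
    using f1 f2 s by (simp add: algebra_simps)
  then have "\<Prod>{n - d..n} = fact (d + 1) * (n choose (d + 1))"
    by (metis fact_nonzero mult_cancel_left)
  note pr = this
  have e: "(\<Prod>j=n-d..n. real j) = real (\<Prod>{n - d..n})" by (simp add: of_nat_prod)
  show ?thesis unfolding e pr of_nat_mult of_nat_fact by (simp add: mult.commute)
qed

lemma helper6:
  fixes C B k n d :: real
  shows "C / (B * (d + 1) / (n - d)) - C * (k - d) / (d + 1) / B = C * (n - k) / (B * (d + 1))"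
proof -
  have 1: "C / (B * (d + 1) / (n - d)) = C * (n - d) / (B * (d + 1))" by simp
  have 2: "C * (k - d) / (d + 1) / B = C * (k - d) / (B * (d + 1))" by (simp add: mult.commute)
  have "C * (n - d) / (B * (d + 1)) - C * (k - d) / (B * (d + 1)) = (C * (n - d) - C * (k - d)) / (B * (d + 1))"
    by (rule diff_divide_distrib[symmetric])
  also have "C * (n - d) - C * (k - d) = C * (n - k)" by (simp add: algebra_simps)
  finally show ?thesis unfolding 1 2 .
qed

lemma fd_formula:
  assumes "d < n"
  shows "Ff n d d k = (\<Prod>j<d. real k - real j) * (real n - real k) / (\<Prod>j=n-d..n. real j)"
proof -
  define A where "A = real (n choose d)"
  define B where "B = real (n choose (d + 1))"
  define Pk where "Pk = (\<Prod>j<d. real k - real j)"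
  have A0: "A > 0" unfolding A_def using assms by simp
  have B0: "B > 0" unfolding B_def using assms by simp
  have AB: "B * (real d + 1) = A * (real n - real d)"
    unfolding A_def B_def using binom_top_rel[OF assms] assms by (simp add: of_nat_diff)
  have kk: "real (k choose (d + 1)) * (real d + 1) = real (k choose d) * (real k - real d)"
    using choose_Suc_R[of k d] by (auto simp: algebra_simps)
  have Ck: "real (k choose d) = Pk / fact d" unfolding Pk_def chooseR ..
  have P: "(\<Prod>j=n-d..n. real j) = B * fact d * (real d + 1)"
    unfolding Pval[OF assms] B_def by (simp add: algebra_simps)
  have nd: "real n - real d > 0" using assms by simp
  have d1: "real d + 1 > 0" by simp
  have F: "(fact d :: real) > 0" by simp
  have Kv: "real (k choose (d + 1)) = real (k choose d) * (real k - real d) / (real d + 1)"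
    using kk d1 by (simp add: field_simps)
  have "Ff n d d k = real (k choose d) / A - real (k choose d) * (real k - real d) / (real d + 1) / B"
    unfolding Ff_def A_def[symmetric] B_def[symmetric] Kv by simp
  also have "\<dots> = real (k choose d) * (real n - real k) / (B * (real d + 1))"
  proof -
    have Av: "A = B * (real d + 1) / (real n - real d)" using AB nd by (simp add: field_simps)
    show ?thesis unfolding Av by (rule helper6)
  qed
  also have "\<dots> = Pk * (real n - real k) / (B * fact d * (real d + 1))"
  proof -
    have h: "\<And>a b c q :: real. a / b * c / q = a * c / (b * q)" by simp
    show ?thesis unfolding Ck h by (simp add: mult_ac)
  qed
  finally show ?thesis unfolding P Pk_def .
qed

lemma sum_reals: "(\<Sum>j<d. real j) = real d * (real d - 1) / 2"
  by (induction d) (auto simp: field_simps)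

lemma pow_from_powr:
  fixes p mu :: real and c :: nat
  assumes "0 \<le> p" "p powr (1 / real (Suc c)) \<le> mu"
  shows "p \<le> mu ^ Suc c"
proof (cases "p = 0")
  case True
  have "0 \<le> mu" using assms True by simp
  then show ?thesis using True by simp
next
  case False
  then have p0: "p > 0" using assms by simp
  have "(p powr (1 / real (Suc c))) ^ Suc c = (p powr (1 / real (Suc c))) powr real (Suc c)"
    by (rule powr_realpow[symmetric]) (use p0 in simp)
  also have "\<dots> = p" using p0 by (simp add: powr_powr)
  finally have e: "(p powr (1 / real (Suc c))) ^ Suc c = p" .
  have "(p powr (1 / real (Suc c))) ^ Suc c \<le> mu ^ Suc c"
    by (rule power_mono) (use assms in auto)
  then show ?thesis using e by simp
qed

lemma amgm_main:
  assumes d1: "1 \<le> d" and dk: "d \<le> k" and kn: "k \<le> n"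
  shows "(\<Prod>j<d. real k - real j) * (real n - real k)
         \<le> real d ^ d / real (d + 1) ^ (d + 1) * (real n - (real d - 1) / 2) ^ (d + 1)"
proof -
  define x where "x j = (if j < d then real k - real j else real d * (real n - real k))" for j
  define N where "N = real n - (real d - 1) / 2"
  have xnn: "\<And>j. j \<in> {..d} \<Longrightarrow> 0 \<le> x j" unfolding x_def using dk kn by auto
  have card: "card {..d} = Suc d" by simp
  have sumx: "(\<Sum>j\<in>{..d}. x j) = real d * N"
  proof -
    have "(\<Sum>j\<in>{..d}. x j) = (\<Sum>j<d. x j) + x d" by (simp add: lessThan_Suc_atMost[symmetric])
    also have "(\<Sum>j<d. x j) = (\<Sum>j<d. real k - real j)" unfolding x_def by simp
    also have "\<dots> = real d * real k - real d * (real d - 1) / 2"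
      by (simp add: sum_subtractf sum_reals)
    finally show ?thesis unfolding N_def x_def by (simp add: algebra_simps)
  qed
  have prodx: "(\<Prod>j\<in>{..d}. x j) = (\<Prod>j<d. real k - real j) * (real d * (real n - real k))"
  proof -
    have "(\<Prod>j\<in>{..d}. x j) = (\<Prod>j<d. x j) * x d" by (simp add: lessThan_Suc_atMost[symmetric])
    also have "(\<Prod>j<d. x j) = (\<Prod>j<d. real k - real j)" unfolding x_def by simp
    finally show ?thesis unfolding x_def by simp
  qed
  have am: "(\<Sum>i\<in>{..d}. x i / real (card {..d})) \<ge> (\<Prod>i\<in>{..d}. x i) powr (1 / real (card {..d}))"
    by (rule arith_geom_mean) (use xnn in auto)
  have mean: "(\<Sum>i\<in>{..d}. x i / real (card {..d})) = real d * N / real (Suc d)"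
    unfolding card sum_divide_distrib[symmetric] sumx ..
  have p0: "0 \<le> (\<Prod>i\<in>{..d}. x i)" using xnn by (intro prod_nonneg) auto
  have am2: "(\<Prod>i\<in>{..d}. x i) powr (1 / real (Suc d)) \<le> real d * N / real (Suc d)"
    using am mean unfolding card by linarith
  have "(\<Prod>i\<in>{..d}. x i) \<le> (real d * N / real (Suc d)) ^ Suc d"
    by (rule pow_from_powr[OF p0 am2])
  also have "\<dots> = real d * (real d ^ d / real (d + 1) ^ (d + 1) * N ^ (d + 1))"
    by (simp add: power_divide power_mult_distrib)
  finally have fin: "(\<Prod>j<d. real k - real j) * (real n - real k) * real d
        \<le> (real d ^ d / real (d + 1) ^ (d + 1) * N ^ (d + 1)) * real d"
    unfolding prodx by (simp add: mult_ac)
  have dpos: "real d > 0" using d1 by simp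
  have "(\<Prod>j<d. real k - real j) * (real n - real k) \<le> real d ^ d / real (d + 1) ^ (d + 1) * N ^ (d + 1)"
    using mult_le_cancel_right_pos[OF dpos] fin by blast
  then show ?thesis unfolding N_def .
qed

lemma P_pos:
  assumes "d < n" shows "(\<Prod>j=n-d..n. real j) > 0"
  using assms by (intro prod_pos) auto

lemma main_bound:
  assumes "1 \<le> d" "d < n" "k \<le> n"
  shows "Ff n d d k \<le> real d ^ d / real (d + 1) ^ (d + 1) *
           ((real n - (real d - 1) / 2) ^ (d + 1) / (\<Prod>j=n-d..n. real j))"
proof (cases "k < d")
  case True
  then have "Ff n d d k = 0" unfolding Ff_def by (simp add: binomial_eq_0)
  moreover have "0 \<le> real d ^ d / real (d + 1) ^ (d + 1) *
           ((real n - (real d - 1) / 2) ^ (d + 1) / (\<Prod>j=n-d..n. real j))"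
    using P_pos[OF assms(2)] assms by (intro mult_nonneg_nonneg divide_nonneg_pos zero_le_power) auto
  ultimately show ?thesis by simp
next
  case False
  have "Ff n d d k = (\<Prod>j<d. real k - real j) * (real n - real k) / (\<Prod>j=n-d..n. real j)"
    by (rule fd_formula[OF assms(2)])
  also have "\<dots> \<le> real d ^ d / real (d + 1) ^ (d + 1) * (real n - (real d - 1) / 2) ^ (d + 1)
                    / (\<Prod>j=n-d..n. real j)"
    using amgm_main[OF assms(1) _ assms(3)] False P_pos[OF assms(2)]
    by (intro divide_right_mono) auto
  finally show ?thesis by simp
qed

lemma lower_ff:
  assumes d1: "1 \<le> d" and dn: "d < n"
  defines "t \<equiv> (d * (n - d) + d) div (d + 1)"
  shows "d \<le> d - 1 + t" "d - 1 + t \<le> n"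
    "real d ^ d / real (d + 1) ^ (d + 1) * (real (n - d) ^ (d + 1) / (\<Prod>j=n-d..n. real j))
       \<le> Ff n d d (d - 1 + t)"
proof -
  define m where "m = n - d"
  have m1: "1 \<le> m" using dn unfolding m_def by simp
  have tdef: "t = (d * m + d) div (d + 1)" unfolding t_def m_def ..
  have t_lo: "d * m \<le> (d + 1) * t"
  proof -
    have "d * m + d = (d + 1) * t + (d * m + d) mod (d + 1)"
      using div_mult_mod_eq[of "d * m + d" "d + 1"] unfolding tdef by (simp only: mult.commute)
    moreover have "(d * m + d) mod (d + 1) < d + 1" by (rule mod_less_divisor) simp
    ultimately show ?thesis by linarith
  qed
  have t_hi: "(d + 1) * t \<le> d * m + d" unfolding tdef by (metis div_mult_self1_is_m mult.commute times_div_less_eq_dividend)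
  have t1: "1 \<le> t"
  proof -
    have "d * 1 \<le> d * m" using m1 by (rule mult_le_mono2)
    then have "d + 1 \<le> d * m + d" using d1 by linarith
    then show ?thesis unfolding tdef by (simp add: Suc_le_eq div_greater_zero_iff)
  qed
  have tm: "t \<le> m"
  proof -
    have "(d + 1) * t < (d + 1) * (m + 1)" using t_hi by (simp add: algebra_simps)
    then have "t < m + 1" by (subst (asm) mult_less_cancel1) simp
    then show ?thesis by simp
  qed
  define K where "K = d - 1 + t"
  show "d \<le> d - 1 + t" using t1 d1 by simp
  show Kn: "d - 1 + t \<le> n" using tm dn unfolding m_def by simp
  have Kr: "real K = real d - 1 + real t" unfolding K_def using d1 by (simp add: of_nat_diff)
  have nK: "real n - real K = real m + 1 - real t" using Kr dn unfolding m_def by (simp add: of_nat_diff)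
  have rt: "real d * real m / (real d + 1) \<le> real t"
  proof -
    have "real (d * m) \<le> real ((d + 1) * t)" using t_lo by (simp only: of_nat_le_iff)
    then have "real d * real m \<le> (real d + 1) * real t" by (simp add: algebra_simps)
    then show ?thesis by (simp add: divide_le_eq mult.commute)
  qed
  have rnk: "real m / (real d + 1) \<le> real n - real K"
  proof -
    have "real ((d + 1) * t) \<le> real (d * m + d)" using t_hi by (simp only: of_nat_le_iff)
    then have "(real d + 1) * real t \<le> real d * real m + real d" by (simp add: algebra_simps)
    then have "real m \<le> (real d + 1) * (real m + 1 - real t)" by (simp add: algebra_simps)
    then show ?thesis unfolding nK by (simp add: divide_le_eq mult.commute)
  qed
  have prodK: "real t ^ d \<le> (\<Prod>j<d. real K - real j)"
  proof -
    have "(\<Prod>j<d. real t) \<le> (\<Prod>j<d. real K - real j)"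
      by (rule prod_mono) (auto simp: Kr)
    then show ?thesis by simp
  qed
  have "(real d * real m / (real d + 1)) ^ d \<le> real t ^ d"
    by (rule power_mono[OF rt]) simp
  then have A1: "(real d * real m / (real d + 1)) ^ d \<le> (\<Prod>j<d. real K - real j)" using prodK by simp
  have "(real d * real m / (real d + 1)) ^ d * (real m / (real d + 1))
        \<le> (\<Prod>j<d. real K - real j) * (real n - real K)"
    by (rule mult_mono[OF A1 rnk]) (auto intro: prod_nonneg simp: Kr)
  also have "(real d * real m / (real d + 1)) ^ d * (real m / (real d + 1))
        = real d ^ d / real (d + 1) ^ (d + 1) * real m ^ (d + 1)"
  proof -
    have "(real d * real m / (real d + 1)) ^ d * (real m / (real d + 1))
        = (real d ^ d * real m ^ d / (real d + 1) ^ d) * (real m / (real d + 1))"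
      by (simp only: power_divide power_mult_distrib)
    also have "\<dots> = real d ^ d * (real m ^ d * real m) / ((real d + 1) ^ d * (real d + 1))"
      by (simp only: times_divide_times_eq mult.assoc)
    also have "\<dots> = real d ^ d / real (d + 1) ^ (d + 1) * real m ^ (d + 1)"
    proof -
      have e1: "real m ^ (d + 1) = real m ^ d * real m" by simp
      have e2: "real (d + 1) ^ (d + 1) = (real d + 1) ^ d * (real d + 1)" by (simp add: algebra_simps)
      show ?thesis by (simp only: e1 e2 times_divide_eq_left)
    qed
    finally show ?thesis .
  qed
  finally have main: "real d ^ d / real (d + 1) ^ (d + 1) * real m ^ (d + 1)
        \<le> (\<Prod>j<d. real K - real j) * (real n - real K)" .
  show "real d ^ d / real (d + 1) ^ (d + 1) * (real (n - d) ^ (d + 1) / (\<Prod>j=n-d..n. real j))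
       \<le> Ff n d d (d - 1 + t)"
  proof -
    have "real d ^ d / real (d + 1) ^ (d + 1) * (real m ^ (d + 1) / (\<Prod>j=n-d..n. real j))
       = (real d ^ d / real (d + 1) ^ (d + 1) * real m ^ (d + 1)) / (\<Prod>j=n-d..n. real j)"
      by (rule times_divide_eq_right)
    also have "\<dots> \<le> (\<Prod>j<d. real K - real j) * (real n - real K) / (\<Prod>j=n-d..n. real j)"
      using main P_pos[OF dn] by (intro divide_right_mono) auto
    finally show ?thesis unfolding fd_formula[OF dn] K_def[symmetric] m_def[symmetric] .
  qed
qed

lemma delta_decomp:
  assumes "cascade_rep d lam k"
  shows "delta n d lam = (\<Sum>i=1..d. Ff n d i (k i))"
proof -
  have seq: "cascade_seq d lam = k" by (rule casc_seq_eq[OF assms])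
  have lam: "lam = (\<Sum>i=1..d. k i choose i)" using assms unfolding cascade_rep_def by blast
  have sh: "upper_shadow d lam = (\<Sum>i=1..d. k i choose (i + 1))" unfolding upper_shadow_def seq ..
  show ?thesis
    unfolding delta_def Ff_def sum_subtractf sh
    by (subst lam) (simp add: sum_divide_distrib)
qed

lemma sum_split_last:
  fixes d :: nat and f :: "nat \<Rightarrow> 'a::comm_monoid_add"
  assumes "1 \<le> d"
  shows "(\<Sum>i=1..d. f i) = (\<Sum>i=1..d-1. f i) + f d"
proof -
  obtain e where e: "d = Suc e" using assms by (cases d) auto
  show ?thesis unfolding e by (simp add: sum.cl_ivl_Suc)
qed

lemma upper_each:
  assumes d2: "2 \<le> d" and dn: "d < n" and lam: "lam \<le> n choose d"
  shows "delta n d lam \<le>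
           real d ^ d / real (d + 1) ^ (d + 1) *
             ((real n - (real d - 1) / 2) ^ (d + 1) / (\<Prod>j=n-d..n. real j))
           + real (d + 1) * real (n + 1) / (real (d - 1) * real (n - d) ^ 2)"
proof -
  define M where "M = real d ^ d / real (d + 1) ^ (d + 1) *
             ((real n - (real d - 1) / 2) ^ (d + 1) / (\<Prod>j=n-d..n. real j))"
  define S where "S = real (d + 1) * real (n + 1) / (real (d - 1) * real (n - d) ^ 2)"
  have M0: "0 \<le> M" unfolding M_def using P_pos[OF dn] dn
    by (intro mult_nonneg_nonneg divide_nonneg_pos zero_le_power) auto
  have lt: "lam < Suc n choose d"
  proof -
    have "0 < n choose (d - 1)" using dn by simp
    moreover have "Suc n choose d = (n choose (d - 1)) + (n choose d)"
      using d2 by (cases d) auto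
    ultimately show ?thesis using lam by linarith
  qed
  define k where "k = cascade_seq d lam"
  have rep: "cascade_rep d lam k" unfolding k_def by (rule casc_seq(1)[OF lt])
  have kd: "k d \<le> n" unfolding k_def using casc_seq(2)[OF lt] d2 by simp
  have dec: "delta n d lam = (\<Sum>i=1..d-1. Ff n d i (k i)) + Ff n d d (k d)"
    using delta_decomp[OF rep] sum_split_last[of d] d2 by simp
  have mainb: "Ff n d d (k d) \<le> M" unfolding M_def by (rule main_bound) (use d2 dn kd in auto)
  show ?thesis
  proof (cases "3 \<le> n - d")
    case True
    have tb: "(\<Sum>i=1..d-1. Ff n d i (k i)) \<le> (real n + 1) ^ 2 / (real n * real (n - d) ^ 2)"
      by (rule tail_bound[OF d2 dn True])
    have "(real n + 1) ^ 2 / (real n * real (n - d) ^ 2) \<le> S"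
    proof -
      define m where "m = real (n - d)"
      have m0: "m > 0" using dn unfolding m_def by simp
      have n0: "real n > 0" using dn by simp
      have d1: "real (d - 1) > 0" using d2 by simp
      have "(real n + 1) * real (d - 1) \<le> real n * real (d + 1)"
        using d2 dn by (simp add: of_nat_diff algebra_simps)
      then have "(real n + 1) / real n \<le> real (d + 1) / real (d - 1)"
        using n0 d1 by (simp add: divide_le_eq le_divide_eq mult.commute)
      then have "(real n + 1) / real n * ((real n + 1) / m ^ 2) \<le> real (d + 1) / real (d - 1) * ((real n + 1) / m ^ 2)"
        using m0 by (intro mult_right_mono) auto
      then show ?thesis unfolding S_def m_def[symmetric] by (simp add: power2_eq_square ac_simps)
    qed
    then show ?thesis using dec tb mainb unfolding M_def[symmetric] S_def[symmetric] by linarith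
  next
    case False
    then have m2: "n - d \<le> 2" by simp
    have "delta n d lam \<le> 1"
    proof -
      have "delta n d lam \<le> real lam / real (n choose d)"
        unfolding delta_def by simp
      also have "\<dots> \<le> 1" using lam dn by (simp add: divide_le_eq)
      finally show ?thesis .
    qed
    moreover have "1 \<le> S"
    proof -
      have a: "real (n - d) ^ 2 \<le> 4" using m2
      proof -
        have "real (n - d) \<le> 2" using m2 by simp
        then show ?thesis using power_mono[of "real (n - d)" 2 2] by simp
      qed
      have "real (d - 1) * real (n - d) ^ 2 \<le> real (d - 1) * 4" using a by (intro mult_left_mono) auto
      also have "\<dots> \<le> real (d + 1) * real (n + 1)"
      proof -
        have "(d - 1) * 4 \<le> (d + 1) * 4" by simp
        also have "\<dots> \<le> (d + 1) * (n + 1)" using d2 dn by (intro mult_le_mono2) simp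
        finally have "(d - 1) * 4 \<le> (d + 1) * (n + 1)" .
        then have "real ((d - 1) * 4) \<le> real ((d + 1) * (n + 1))" by (simp only: of_nat_le_iff)
        then show ?thesis by (simp only: of_nat_mult of_nat_numeral)
      qed
      finally have "real (d - 1) * real (n - d) ^ 2 \<le> real (d + 1) * real (n + 1)" .
      moreover have "real (d - 1) * real (n - d) ^ 2 > 0" using d2 dn by simp
      ultimately show ?thesis unfolding S_def
        using le_divide_eq_1_pos[of "real (d - 1) * real (n - d) ^ 2" "real (d + 1) * real (n + 1)"] by blast
    qed
    ultimately show ?thesis using M0 unfolding M_def[symmetric] S_def[symmetric] by linarith
  qed
qed

lemma lower_exists:
  assumes d2: "2 \<le> d" and dn: "d < n"
  shows "\<exists>lam \<le> n choose d. real d ^ d / real (d + 1) ^ (d + 1) *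
           (real (n - d) ^ (d + 1) / (\<Prod>j=n-d..n. real j)) \<le> delta n d lam"
proof -
  have d1: "1 \<le> d" using d2 by simp
  define t where "t = (d * (n - d) + d) div (d + 1)"
  define K where "K = d - 1 + t"
  have Kd: "d \<le> K" and Kn: "K \<le> n" unfolding K_def t_def using lower_ff[OF d1 dn] by auto
  have low: "real d ^ d / real (d + 1) ^ (d + 1) * (real (n - d) ^ (d + 1) / (\<Prod>j=n-d..n. real j))
       \<le> Ff n d d K" unfolding K_def t_def using lower_ff(3)[OF d1 dn] .
  define k0 where "k0 i = (if i \<in> {1..<d} then i - 1 else if i = d then K else 0)" for i
  have z: "(\<Sum>i=1..d-1. k0 i choose i) = 0"
    by (rule sum.neutral) (auto simp: k0_def)
  have rep: "cascade_rep d (K choose d) k0"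
    unfolding cascade_rep_def
  proof (intro conjI)
    show "\<forall>i. i \<notin> {1..d} \<longrightarrow> k0 i = 0" unfolding k0_def using d1 by auto
    show "\<forall>i\<in>{1..<d}. k0 i < k0 (Suc i)" unfolding k0_def using Kd by auto
    show "K choose d = (\<Sum>i=1..d. k0 i choose i)"
    proof -
      have "(\<Sum>i=1..d. k0 i choose i) = (\<Sum>i=1..d-1. k0 i choose i) + (k0 d choose d)"
        by (rule sum_split_last[OF d1])
      then show ?thesis using z d1 by (simp add: k0_def)
    qed
  qed
  have tail0: "(\<Sum>i=1..d-1. Ff n d i (k0 i)) = 0"
    by (rule sum.neutral) (auto simp: k0_def Ff_def binomial_eq_0)
  have k0d: "k0 d = K" unfolding k0_def by simp
  have "delta n d (K choose d) = (\<Sum>i=1..d-1. Ff n d i (k0 i)) + Ff n d d (k0 d)"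
    unfolding delta_decomp[OF rep, of n] by (rule sum_split_last[OF d1])
  then have "delta n d (K choose d) = Ff n d d K" unfolding tail0 k0d by simp
  moreover have "K choose d \<le> n choose d" using Kn by (rule binomial_right_mono)
  ultimately show ?thesis using low by auto
qed

theorem lemma6p2:
  fixes n d :: nat
  assumes "2 \<le> d" and "d < n"
  shows "real d ^ d / real (d + 1) ^ (d + 1) *
           (real (n - d) ^ (d + 1) / (\<Prod>j=n-d..n. real j)) \<le> delta_bar n d \<and>
         delta_bar n d \<le>
           real d ^ d / real (d + 1) ^ (d + 1) *
             ((real n - (real d - 1) / 2) ^ (d + 1) / (\<Prod>j=n-d..n. real j))
           + real (d + 1) * real (n + 1) / (real (d - 1) * real (n - d) ^ 2)"
proof
  have fin: "finite ((\<lambda>lam. delta n d lam) ` {0..n choose d})" by simp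
  have ne: "(\<lambda>lam. delta n d lam) ` {0..n choose d} \<noteq> {}" by simp
  obtain lam where lam: "lam \<le> n choose d" and lo: "real d ^ d / real (d + 1) ^ (d + 1) *
           (real (n - d) ^ (d + 1) / (\<Prod>j=n-d..n. real j)) \<le> delta n d lam"
    using lower_exists[OF assms] by blast
  have "delta n d lam \<le> delta_bar n d"
    unfolding delta_bar_def by (rule Max_ge[OF fin]) (use lam in auto)
  then show "real d ^ d / real (d + 1) ^ (d + 1) *
           (real (n - d) ^ (d + 1) / (\<Prod>j=n-d..n. real j)) \<le> delta_bar n d" using lo by linarith
  show "delta_bar n d \<le>
           real d ^ d / real (d + 1) ^ (d + 1) *
             ((real n - (real d - 1) / 2) ^ (d + 1) / (\<Prod>j=n-d..n. real j))
           + real (d + 1) * real (n + 1) / (real (d - 1) * real (n - d) ^ 2)"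
    unfolding delta_bar_def using upper_each[OF assms] by (subst Max_le_iff[OF fin ne]) auto
qed

end
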